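(* Let $X$ be the ARH(1) process described in the context, with $k_n$ a truncation parameter ($k_n\to\infty$, $k_n/n<1$) such that, for some $\beta>1/2$, $\sqrt{k_n}\,\Lambda_{k_n}=o\left(n^{1/4}/(\ln(n))^{\beta}\right)$. Assume Assumptions A1, A2, A3 and A4 hold and that $\rho$ is a trace operator. Suppose $M_n$ is a sequence with $\|\mathcal{D}_n\mathcal{C}_n^{-1}-D_XC_X^{-1}\|_{\mathcal{L}(H)}=\mathcal{O}(M_n)$ almost surely, and $k_n\Lambda^{\rho}_{k_n}=o(1/M_n)$ as $n\to\infty$. Define the diagonal componentwise estimator $$\widehat\rho_{k_n}(x)=\sum_{j=1}^{k_n}\widehat\rho_{n,j}\langle x,\psi_{n,j}\rangle_H\,\widetilde\psi_{n,j},\quad x\in H.$$ Then $\|\widehat\rho_{k_n}-\rho\|_{\mathcal{L}(H)}\to0$ almost surely as $n\to\infty$.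
   Context: $H$ is a real separable Hilbert space and $\mathcal{L}(H)$ is the space of bounded linear operators on $H$ with the operator norm. $X=\{X_n,\ n\in\mathbb{Z}\}$ is a zero-mean ARH(1) process: $X_n=\rho(X_{n-1})+\varepsilon_n$, where $\rho\in\mathcal{L}(H)$ satisfies $\|\rho^k\|_{\mathcal{L}(H)}<1$ for all $k\ge k_0$, for some $k_0$; $\varepsilon$ is an $H$-valued strong white noise uncorrelated with the initial condition, and $X$ is the unique stationary solution. For $x,y\in H$, $(x\otimes y)(f)=\langle x,f\rangle_H\, y$. $C_X=\mathrm{E}[X_0\otimes X_0]$ has eigenvalues $C_1\ge C_2\ge\dots$ with orthonormal eigenvectors $\phi_j$; $D_X=\mathrm{E}[X_0\otimes X_1]$, and $\rho=D_XC_X^{-1}$. $\mathcal{C}_n=\frac1n\sum_{i=0}^{n-1}X_i\otimes X_i$ has eigenvalues $C_{n,1}\ge\dots\ge C_{n,n}\ge0=C_{n,n+1}=\dots$ with orthonormal eigenvectors $\phi_{n,j}$; $\mathcal{C}_n^{-1}=\sum_{j:\,C_{n,j}>0}C_{n,j}^{-1}\phi_{n,j}\otimes\phi_{n,j}$. $\mathcal{D}_n=\frac{1}{n-1}\sum_{i=0}^{n-2}X_i\otimes X_{i+1}$. $\Lambda_{k_n}=\sup_{1\le j\le k_n}(C_j-C_{j+1})^{-1}$. Assumption A1: $\|X_0\|_H<M$ a.s. Assumption A2: $C_{n,k_n}>0$ a.s. Assumption A3: $C_j>0$ for all $j$, $D_X$ is nuclear, and $\rho$ is compact. Under A3, $\rho$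 has the singular value decomposition $\rho(x)=\sum_{j\ge1}\rho_j\langle x,\psi_j\rangle_H\widetilde\psi_j$, with $\rho(\psi_j)=\rho_j\widetilde\psi_j$, orthonormal right singular vectors $\psi_j$, orthonormal left singular vectors $\widetilde\psi_j$, and $|\rho_1|\ge|\rho_2|\ge\dots$. The compact operator $\mathcal{D}_n\mathcal{C}_n^{-1}$ (for $n$ large) has singular value decomposition $\mathcal{D}_n\mathcal{C}_n^{-1}(h)=\sum_{j=1}^{n}\widehat\rho_{n,j}\langle h,\psi_{n,j}\rangle_H\widetilde\psi_{n,j}$, with $\mathcal{D}_n\mathcal{C}_n^{-1}(\psi_{n,j})=\widehat\rho_{n,j}\widetilde\psi_{n,j}$ and orthonormal families $\{\psi_{n,j}\}$, $\{\widetilde\psi_{n,j}\}$. $\Lambda^{\rho}_{k_n}=\sup_{1\le j\le k_n}(|\rho_j|^2-|\rho_{j+1}|^2)^{-1}$ (assumed finite). Assumption A4: $\sup_{j\ge1}|\rho_j|+\sup_{j\ge1}|\widehat\rho_{n,j}|\le 1$. *)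

theory Defs
  imports "HOL-Probability.Probability" "HOL-Library.Landau_Symbols"
begin

definition tensor_op :: "'h::real_inner \<Rightarrow> 'h \<Rightarrow> 'h \<Rightarrow> 'h" where
  "tensor_op x y f = inner x f *\<^sub>R y"

definition orthonormal_on :: "nat set \<Rightarrow> (nat \<Rightarrow> 'h::real_inner) \<Rightarrow> bool" where
  "orthonormal_on J e \<longleftrightarrow> (\<forall>i\<in>J. \<forall>j\<in>J. inner (e i) (e j) = (if i = j then 1 else 0))"

definition nuclear_op :: "('h::real_inner \<Rightarrow> 'h) \<Rightarrow> bool" where
  "nuclear_op T \<longleftrightarrow> bounded_linear T \<and>
     (\<exists>a b :: nat \<Rightarrow> 'h. summable (\<lambda>j. norm (a j) * norm (b j)) \<and>
        (\<forall>x. (\<lambda>j. inner (a j) x *\<^sub>R b j) sums T x))"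

definition compact_op :: "('h::real_normed_vector \<Rightarrow> 'h) \<Rightarrow> bool" where
  "compact_op T \<longleftrightarrow> bounded_linear T \<and> compact (closure (T ` ball 0 1))"

text \<open>C_X = E[X_0 \<otimes> X_0], D_X = E[X_0 \<otimes> X_1], applied pointwise (Bochner integrals in H).\<close>
definition cov_op :: "'a measure \<Rightarrow> ('a \<Rightarrow> 'h::{real_inner,banach,second_countable_topology})
    \<Rightarrow> ('a \<Rightarrow> 'h) \<Rightarrow> 'h \<Rightarrow> 'h" where
  "cov_op P U V f = (\<integral>\<omega>. tensor_op (U \<omega>) (V \<omega>) f \<partial>P)"

definition emp_cov :: "(int \<Rightarrow> 'a \<Rightarrow> 'h::real_inner) \<Rightarrow> nat \<Rightarrow> 'a \<Rightarrow> 'h \<Rightarrow> 'h" where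
  "emp_cov X n \<omega> f = (1 / real n) *\<^sub>R (\<Sum>i<n. tensor_op (X (int i) \<omega>) (X (int i) \<omega>) f)"

definition emp_cross :: "(int \<Rightarrow> 'a \<Rightarrow> 'h::real_inner) \<Rightarrow> nat \<Rightarrow> 'a \<Rightarrow> 'h \<Rightarrow> 'h" where
  "emp_cross X n \<omega> f = (1 / (real n - 1)) *\<^sub>R
      (\<Sum>i<n - 1. tensor_op (X (int i) \<omega>) (X (int i + 1) \<omega>) f)"

text \<open>C_n^{-1} = sum over j with C_{n,j} > 0 of C_{n,j}^{-1} \<phi>_{n,j} \<otimes> \<phi>_{n,j},
  built from the eigen-data (Cn, phin) of C_n (eigenvalues C_{n,j} = 0 for j > n).\<close>
definition emp_cov_inv :: "(nat \<Rightarrow> 'a \<Rightarrow> nat \<Rightarrow> real) \<Rightarrow> (nat \<Rightarrow> 'a \<Rightarrow> nat \<Rightarrow> 'h::real_inner)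
    \<Rightarrow> nat \<Rightarrow> 'a \<Rightarrow> 'h \<Rightarrow> 'h" where
  "emp_cov_inv Cn phin n \<omega> f =
     (\<Sum>j\<in>{j\<in>{1..n}. Cn n \<omega> j > 0}. inverse (Cn n \<omega> j) *\<^sub>R tensor_op (phin n \<omega> j) (phin n \<omega> j) f)"

definition Lambda_gap :: "(nat \<Rightarrow> real) \<Rightarrow> nat \<Rightarrow> real" where
  "Lambda_gap C k = Max ((\<lambda>j. inverse (C j - C (Suc j))) ` {1..k})"

definition Lambda_rho :: "(nat \<Rightarrow> real) \<Rightarrow> nat \<Rightarrow> real" where
  "Lambda_rho r k = Max ((\<lambda>j. inverse (\<bar>r j\<bar>^2 - \<bar>r (Suc j)\<bar>^2)) ` {1..k})"

definition diag_est :: "(nat \<Rightarrow> 'a \<Rightarrow> nat \<Rightarrow> real) \<Rightarrow> (nat \<Rightarrow> 'a \<Rightarrow> nat \<Rightarrow> 'h::real_inner)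
    \<Rightarrow> (nat \<Rightarrow> 'a \<Rightarrow> nat \<Rightarrow> 'h) \<Rightarrow> nat \<Rightarrow> nat \<Rightarrow> 'a \<Rightarrow> 'h \<Rightarrow> 'h" where
  "diag_est rh ps pst kn n \<omega> x = (\<Sum>j\<in>{1..kn}. (rh n \<omega> j * inner x (ps n \<omega> j)) *\<^sub>R pst n \<omega> j)"

end

theory Submission
  imports Defs
begin


lemma on_inner: "orthonormal_on J e \<Longrightarrow> i \<in> J \<Longrightarrow> j \<in> J \<Longrightarrow> inner (e i) (e j) = (if i = j then 1 else 0)"
  unfolding orthonormal_on_def by blast

lemma on_sub: "orthonormal_on J e \<Longrightarrow> F \<subseteq> J \<Longrightarrow> orthonormal_on F e"
  unfolding orthonormal_on_def by blast

lemma on_inner_sum: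
  assumes "orthonormal_on J e" "finite F" "F \<subseteq> J" "i \<in> J"
  shows "inner (\<Sum>j\<in>F. a j *\<^sub>R e j) (e i) = (if i \<in> F then a i else 0)"
proof -
  have "inner (\<Sum>j\<in>F. a j *\<^sub>R e j) (e i) = (\<Sum>j\<in>F. a j * (if j = i then 1 else 0))"
    using assms by (auto simp: inner_sum_left on_inner intro!: sum.cong)
  also have "\<dots> = (if i \<in> F then a i else 0)"
    using assms(2) by (simp add: sum.delta' if_distrib cong: if_cong)
  finally show ?thesis .
qed

lemma on_norm2:
  assumes "orthonormal_on J e" "finite F" "F \<subseteq> J"
  shows "(norm (\<Sum>j\<in>F. a j *\<^sub>R e j))\<^sup>2 = (\<Sum>j\<in>F. (a j)\<^sup>2)"
proof -
  have "(norm (\<Sum>j\<in>F. a j *\<^sub>R e j))\<^sup>2 = inner (\<Sum>j\<in>F. a j *\<^sub>R e j) (\<Sum>j\<in>F. a j *\<^sub>R e j)"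
    by (simp add: power2_norm_eq_inner)
  also have "\<dots> = (\<Sum>i\<in>F. a i * inner (\<Sum>j\<in>F. a j *\<^sub>R e j) (e i))"
    by (simp add: inner_sum_right mult.commute)
  also have "\<dots> = (\<Sum>i\<in>F. (a i)\<^sup>2)"
    using assms by (auto intro!: sum.cong simp: on_inner_sum power2_eq_square subsetD)
  finally show ?thesis .
qed

lemma bessel:
  assumes "orthonormal_on J e" "finite F" "F \<subseteq> J"
  shows "(\<Sum>j\<in>F. (inner x (e j))\<^sup>2) \<le> (norm x)\<^sup>2"
proof -
  define y where "y = (\<Sum>j\<in>F. inner x (e j) *\<^sub>R e j)"
  have ny: "(norm y)\<^sup>2 = (\<Sum>j\<in>F. (inner x (e j))\<^sup>2)"
    unfolding y_def by (rule on_norm2[OF assms])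
  have xy: "inner x y = (\<Sum>j\<in>F. (inner x (e j))\<^sup>2)"
    unfolding y_def by (simp add: inner_sum_right power2_eq_square)
  have "0 \<le> (norm (x - y))\<^sup>2" by simp
  also have "\<dots> = (norm x)\<^sup>2 - 2 * inner x y + (norm y)\<^sup>2"
    by (simp add: power2_norm_eq_inner inner_diff_left inner_diff_right inner_commute)
  finally show ?thesis using ny xy by simp
qed

lemma span_expand:
  assumes "orthonormal_on J e" "finite F" "F \<subseteq> J" "x \<in> span (e ` F)"
  shows "x = (\<Sum>j\<in>F. inner x (e j) *\<^sub>R e j)"
proof (rule span_induct[OF assms(4), where P = "\<lambda>x. x = (\<Sum>j\<in>F. inner x (e j) *\<^sub>R e j)"])
  show "subspace {x. x = (\<Sum>j\<in>F. inner x (e j) *\<^sub>R e j)}"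
    unfolding subspace_def
  proof (intro conjI allI ballI impI)
    fix c x assume "x \<in> {x. x = (\<Sum>j\<in>F. inner x (e j) *\<^sub>R e j)}"
    then have h: "x = (\<Sum>j\<in>F. inner x (e j) *\<^sub>R e j)" by simp
    have "c *\<^sub>R x = c *\<^sub>R (\<Sum>j\<in>F. inner x (e j) *\<^sub>R e j)" using h by simp
    also have "\<dots> = (\<Sum>j\<in>F. inner (c *\<^sub>R x) (e j) *\<^sub>R e j)"
      by (simp add: scaleR_sum_right)
    finally show "c *\<^sub>R x \<in> {x. x = (\<Sum>j\<in>F. inner x (e j) *\<^sub>R e j)}"
      unfolding mem_Collect_eq .
  qed (auto simp: inner_add_left scaleR_add_left sum.distrib)
next
  fix x assume "x \<in> e ` F"
  then obtain i where i: "i \<in> F" "x = e i" by auto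
  have "(\<Sum>j\<in>F. inner (e i) (e j) *\<^sub>R e j) = (\<Sum>j\<in>F. (if i = j then e j else 0))"
  proof (rule sum.cong)
    fix j assume "j \<in> F"
    then show "inner (e i) (e j) *\<^sub>R e j = (if i = j then e j else 0)"
      using i assms on_inner[OF assms(1), of i j] by (auto simp: subsetD)
  qed simp
  also have "\<dots> = e i" using i assms(2) by (simp add: sum.delta)
  finally show "x = (\<Sum>j\<in>F. inner x (e j) *\<^sub>R e j)" using i by simp
qed

lemma bl_sum: "bounded_linear (\<lambda>x. \<Sum>j\<in>F. (c j * inner x (u j)) *\<^sub>R (v j :: 'h::real_inner))"
proof -
  have "\<And>j. bounded_linear (\<lambda>x. (c j * inner x (u j)) *\<^sub>R (v j :: 'h))"
  proof -
    fix j
    show "bounded_linear (\<lambda>x. (c j * inner x (u j)) *\<^sub>R (v j :: 'h))"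
      using bounded_linear_compose[OF bounded_linear_scaleR_left
          bounded_linear_compose[OF bounded_linear_mult_right bounded_linear_inner_left,
             of "c j" "u j"], of "v j"] by simp
  qed
  then show ?thesis by (rule bounded_linear_sum)
qed

lemma kernel_exists:
  assumes ov: "orthonormal_on J v" and FJ: "{1..Suc k} \<subseteq> J" and ow: "orthonormal_on {1..} (w :: nat \<Rightarrow> 'h::real_inner)"
  shows "\<exists>x. norm x = 1 \<and> x \<in> span (v ` {1..Suc k}) \<and> (\<forall>i\<in>{1..k}. inner x (w i) = 0)"
proof -
  define V where "V = v ` {1..Suc k}"
  define f where "f y = (\<Sum>i\<in>{1..k}. inner y (w i) *\<^sub>R w i)" for y
  have "bounded_linear (\<lambda>y. \<Sum>i\<in>{1..k}. (1 * inner y (w i)) *\<^sub>R w i)" by (rule bl_sum)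
  then have lin: "linear f" unfolding f_def by (simp add: bounded_linear.linear)
  have vin: "\<And>i j. i \<in> {1..Suc k} \<Longrightarrow> j \<in> {1..Suc k} \<Longrightarrow> inner (v i) (v j) = (if i = j then 1 else 0)"
    using on_inner[OF ov] FJ by (meson subsetD)
  have injv: "inj_on v {1..Suc k}"
  proof (rule inj_onI)
    fix i j assume "i \<in> {1..Suc k}" "j \<in> {1..Suc k}" "v i = v j"
    then show "i = j" using vin[of i j] vin[of i i] by (auto split: if_splits)
  qed
  have cardV: "card V = Suc k" unfolding V_def using card_image[OF injv] by simp
  have indep: "independent V"
  proof (rule pairwise_orthogonal_independent)
    show "pairwise orthogonal V" unfolding V_def pairwise_def orthogonal_def
      using vin by auto
    show "0 \<notin> V" unfolding V_def using vin by force
  qed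
  have fs: "f y \<in> span (w ` {1..k})" for y
    unfolding f_def by (rule span_sum, rule span_scale, rule span_base) auto
  have "\<not> inj_on f (span V)"
  proof
    assume inj: "inj_on f (span V)"
    have ind2: "independent (f ` V)" by (rule linear_independent_injective_image[OF lin indep inj])
    have "inj_on f V" using inj_on_subset[OF inj span_superset] .
    then have "card (f ` V) = Suc k" using cardV card_image by metis
    moreover have "card (f ` V) \<le> card (w ` {1..k})"
      using independent_span_bound[OF _ ind2] fs by auto
    moreover have "card (w ` {1..k}) \<le> k" using card_image_le[of "{1..k}" w] by simp
    ultimately show False by simp
  qed
  then obtain a b where ab: "a \<in> span V" "b \<in> span V" "a \<noteq> b" "f a = f b"
    unfolding inj_on_def by blast
  define x0 where "x0 = a - b"
  have x0s: "x0 \<in> span V" unfolding x0_def using ab by (simp add: span_diff)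
  have x0n: "x0 \<noteq> 0" unfolding x0_def using ab by simp
  have fx0: "f x0 = 0" unfolding x0_def using ab linear_diff[OF lin] by simp
  have orth: "inner x0 (w i) = 0" if "i \<in> {1..k}" for i
  proof -
    have "inner (f x0) (w i) = (if i \<in> {1..k} then inner x0 (w i) else 0)"
      unfolding f_def by (rule on_inner_sum[OF ow]) (use that in auto)
    then show ?thesis using fx0 that by simp
  qed
  define x where "x = x0 /\<^sub>R norm x0"
  show ?thesis
  proof (intro exI conjI ballI)
    show "norm x = 1" unfolding x_def using x0n by simp
    show "x \<in> span (v ` {1..Suc k})" unfolding x_def using x0s V_def by (simp add: span_scale)
    fix i assume "i \<in> {1..k}" then show "inner x (w i) = 0" unfolding x_def using orth by simp
  qed
qed



lemma abs_mono_chain: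
  assumes "\<And>j. j \<ge> 1 \<Longrightarrow> j < n \<Longrightarrow> \<bar>f (Suc j)\<bar> \<le> \<bar>(f j::real)\<bar>" "1 \<le> i" "i \<le> j" "j \<le> n"
  shows "\<bar>f j\<bar> \<le> \<bar>f i\<bar>"
  using assms(3,4)
proof (induction j rule: dec_induct)
  case base then show ?case by simp
next
  case (step m)
  then have "\<bar>f (Suc m)\<bar> \<le> \<bar>f m\<bar>" using assms(1)[of m] assms(2) by simp
  with step show ?case by simp
qed

lemma on_norm_diff2:
  assumes "orthonormal_on J e" "i \<in> J" "j \<in> J" "i \<noteq> j"
  shows "(norm (a *\<^sub>R e i - b *\<^sub>R e j))\<^sup>2 = a\<^sup>2 + b\<^sup>2"
proof -
  have ii: "inner (e i) (e i) = 1" "inner (e j) (e j) = 1" "inner (e i) (e j) = 0" "inner (e j) (e i) = 0"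
    using on_inner[OF assms(1)] assms by auto
  have "(norm (a *\<^sub>R e i - b *\<^sub>R e j))\<^sup>2 = inner (a *\<^sub>R e i - b *\<^sub>R e j) (a *\<^sub>R e i - b *\<^sub>R e j)"
    by (simp only: power2_norm_eq_inner)
  also have "\<dots> = a\<^sup>2 + b\<^sup>2"
    by (simp add: inner_diff_left inner_diff_right ii power2_eq_square)
  finally show ?thesis .
qed

lemma rho_bound:
  fixes \<rho> :: "'h::real_inner \<Rightarrow> 'h"
  assumes psi_on: "orthonormal_on {1..} \<psi>" and psit_on: "orthonormal_on {1..} \<psi>t"
    and rho_svd: "(\<lambda>m. \<Sum>j\<in>{1..m}. (r j * inner x (\<psi> j)) *\<^sub>R \<psi>t j) \<longlonglongrightarrow> \<rho> x"
    and r_mono: "\<And>j. j \<ge> 1 \<Longrightarrow> \<bar>r (Suc j)\<bar> \<le> \<bar>r j\<bar>"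
    and orth: "\<forall>i\<in>{1..k}. inner x (\<psi> i) = 0"
  shows "norm (\<rho> x) \<le> \<bar>r (Suc k)\<bar> * norm x"
proof -
  have mono: "\<bar>r j\<bar> \<le> \<bar>r (Suc k)\<bar>" if "Suc k \<le> j" for j
    using abs_mono_chain[of "Suc j" r "Suc k" j] r_mono that by simp
  have bnd: "norm (\<Sum>j\<in>{1..m}. (r j * inner x (\<psi> j)) *\<^sub>R \<psi>t j) \<le> \<bar>r (Suc k)\<bar> * norm x" for m
  proof -
    have "(norm (\<Sum>j\<in>{1..m}. (r j * inner x (\<psi> j)) *\<^sub>R \<psi>t j))\<^sup>2 = (\<Sum>j\<in>{1..m}. (r j * inner x (\<psi> j))\<^sup>2)"
      by (rule on_norm2[OF psit_on]) auto
    also have "\<dots> \<le> (\<Sum>j\<in>{1..m}. (r (Suc k))\<^sup>2 * (inner x (\<psi> j))\<^sup>2)"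
    proof (rule sum_mono)
      fix j assume j: "j \<in> {1..m}"
      show "(r j * inner x (\<psi> j))\<^sup>2 \<le> (r (Suc k))\<^sup>2 * (inner x (\<psi> j))\<^sup>2"
      proof (cases "j \<le> k")
        case True then show ?thesis using orth j by simp
      next
        case False
        then have "\<bar>r j\<bar> \<le> \<bar>r (Suc k)\<bar>" using mono by simp
        then have "(r j)\<^sup>2 \<le> (r (Suc k))\<^sup>2" by (metis abs_ge_zero power2_abs power_mono)
        then show ?thesis by (simp add: power_mult_distrib mult_right_mono)
      qed
    qed
    also have "\<dots> = (r (Suc k))\<^sup>2 * (\<Sum>j\<in>{1..m}. (inner x (\<psi> j))\<^sup>2)" by (simp add: sum_distrib_left)
    also have "\<dots> \<le> (r (Suc k))\<^sup>2 * (norm x)\<^sup>2"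
      by (rule mult_left_mono[OF bessel[OF psi_on]]) auto
    also have "\<dots> = (\<bar>r (Suc k)\<bar> * norm x)\<^sup>2" by (simp add: power_mult_distrib)
    finally show ?thesis by (rule power2_le_imp_le) simp
  qed
  show ?thesis
    by (rule LIMSEQ_le_const2[OF tendsto_norm[OF rho_svd]]) (use bnd in auto)
qed

lemma r_to_0:
  fixes \<rho> :: "'h::real_inner \<Rightarrow> 'h"
  assumes cpt: "compact_op \<rho>"
    and psi_on: "orthonormal_on {1..} \<psi>" and psit_on: "orthonormal_on {1..} \<psi>t"
    and rho_svd: "\<And>x. (\<lambda>m. \<Sum>j\<in>{1..m}. (r j * inner x (\<psi> j)) *\<^sub>R \<psi>t j) \<longlonglongrightarrow> \<rho> x"
    and r_mono: "\<And>j. j \<ge> 1 \<Longrightarrow> \<bar>r (Suc j)\<bar> \<le> \<bar>r j\<bar>"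
  shows "r \<longlonglongrightarrow> 0"
proof -
  have bl: "bounded_linear \<rho>" and cS: "compact (closure (\<rho> ` ball 0 1))"
    using cpt unfolding compact_op_def by auto
  have eig: "\<rho> (\<psi> j) = r j *\<^sub>R \<psi>t j" if "j \<ge> 1" for j
  proof -
    have ev: "\<forall>\<^sub>F m in sequentially. (\<Sum>i\<in>{1..m}. (r i * inner (\<psi> j) (\<psi> i)) *\<^sub>R \<psi>t i) = r j *\<^sub>R \<psi>t j"
    proof (rule eventually_sequentiallyI[of j])
      fix m assume "j \<le> m"
      have "(\<Sum>i\<in>{1..m}. (r i * inner (\<psi> j) (\<psi> i)) *\<^sub>R \<psi>t i) = (\<Sum>i\<in>{1..m}. (if j = i then r j *\<^sub>R \<psi>t j else 0))"
      proof (rule sum.cong)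
        fix i assume "i \<in> {1..m}"
        then show "(r i * inner (\<psi> j) (\<psi> i)) *\<^sub>R \<psi>t i = (if j = i then r j *\<^sub>R \<psi>t j else 0)"
          using on_inner[OF psi_on, of j i] that by auto
      qed simp
      also have "\<dots> = r j *\<^sub>R \<psi>t j" using \<open>j \<le> m\<close> that by (simp add: sum.delta)
      finally show "(\<Sum>i\<in>{1..m}. (r i * inner (\<psi> j) (\<psi> i)) *\<^sub>R \<psi>t i) = r j *\<^sub>R \<psi>t j" .
    qed
    show ?thesis using LIMSEQ_unique[OF rho_svd[of "\<psi> j"] tendsto_eventually[OF ev]] .
  qed
  have claim: "\<exists>j\<ge>1. \<bar>r j\<bar> < e" if e: "e > 0" for e
  proof (rule ccontr)
    assume "\<not> ?thesis"
    then have ge: "\<And>j. j \<ge> 1 \<Longrightarrow> \<bar>r j\<bar> \<ge> e" by force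
    define f where "f j = \<rho> ((1/2) *\<^sub>R \<psi> (Suc j))" for j
    have fj: "f j = (r (Suc j) / 2) *\<^sub>R \<psi>t (Suc j)" for j
      unfolding f_def using eig[of "Suc j"] bounded_linear.linear[OF bl]
      by (simp add: linear_scale)
    have "f j \<in> closure (\<rho> ` ball 0 1)" for j
    proof -
      have "norm (\<psi> (Suc j)) = 1" using on_inner[OF psi_on, of "Suc j" "Suc j"]
        by (simp add: norm_eq_sqrt_inner)
      then have "(1/2) *\<^sub>R \<psi> (Suc j) \<in> ball 0 1" by simp
      then show ?thesis unfolding f_def by (meson closure_subset imageI subsetD)
    qed
    then obtain l \<sigma> where \<sigma>: "strict_mono \<sigma>" "(f \<circ> \<sigma>) \<longlonglongrightarrow> l"
      using cS unfolding compact_def by metis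
    have "Cauchy (f \<circ> \<sigma>)" by (rule LIMSEQ_imp_Cauchy[OF \<sigma>(2)])
    then obtain M where M: "\<And>m n. m \<ge> M \<Longrightarrow> n \<ge> M \<Longrightarrow> dist ((f \<circ> \<sigma>) m) ((f \<circ> \<sigma>) n) < e/2"
      unfolding Cauchy_def using e by (meson half_gt_zero)
    have d: "dist (f (\<sigma> M)) (f (\<sigma> (Suc M))) < e/2" using M[of M "Suc M"] by simp
    have neq: "Suc (\<sigma> M) \<noteq> Suc (\<sigma> (Suc M))" using strict_monoD[OF \<sigma>(1), of M "Suc M"] by simp
    have "(dist (f (\<sigma> M)) (f (\<sigma> (Suc M))))\<^sup>2 = (r (Suc (\<sigma> M)) / 2)\<^sup>2 + (r (Suc (\<sigma> (Suc M))) / 2)\<^sup>2"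
      unfolding dist_norm fj by (rule on_norm_diff2[OF psit_on _ _ neq]) auto
    also have "\<dots> \<ge> (e/2)\<^sup>2"
    proof -
      have "e/2 \<le> \<bar>r (Suc (\<sigma> M)) / 2\<bar>" using ge[of "Suc (\<sigma> M)"] by simp
      then have "(e/2)\<^sup>2 \<le> (r (Suc (\<sigma> M)) / 2)\<^sup>2" using e
        by (metis abs_ge_zero less_imp_le half_gt_zero power2_abs power_mono)
      then show ?thesis by (smt (verit) zero_le_power2)
    qed
    finally have "e/2 \<le> dist (f (\<sigma> M)) (f (\<sigma> (Suc M)))"
      by (rule power2_le_imp_le) simp
    then show False using d by simp
  qed
  show ?thesis
  proof (rule LIMSEQ_I)
    fix e :: real assume "e > 0"
    then obtain j where j: "j \<ge> 1" "\<bar>r j\<bar> < e" using claim by blast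
    show "\<exists>N. \<forall>n\<ge>N. norm (r n - 0) < e"
    proof (intro exI allI impI)
      fix n assume "n \<ge> j"
      then have "\<bar>r n\<bar> \<le> \<bar>r j\<bar>" using abs_mono_chain[of "Suc n" r j n] r_mono j by simp
      then show "norm (r n - 0) < e" using j by simp
    qed
  qed
qed



lemma sv_bound:
  fixes \<rho> :: "'h::real_inner \<Rightarrow> 'h" and ps pst :: "nat \<Rightarrow> 'h"
  assumes kn: "k < n" and ps_on: "orthonormal_on {1..n} ps" and pst_on: "orthonormal_on {1..n} pst"
    and rh_mono: "\<And>j. 1 \<le> j \<Longrightarrow> j < n \<Longrightarrow> \<bar>rh (Suc j)\<bar> \<le> \<bar>rh j\<bar>"
    and psi_on: "orthonormal_on {1..} \<psi>" and psit_on: "orthonormal_on {1..} \<psi>t"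
    and rho_svd: "\<And>x. (\<lambda>m. \<Sum>j\<in>{1..m}. (r j * inner x (\<psi> j)) *\<^sub>R \<psi>t j) \<longlonglongrightarrow> \<rho> x"
    and r_mono: "\<And>j. j \<ge> 1 \<Longrightarrow> \<bar>r (Suc j)\<bar> \<le> \<bar>r j\<bar>"
    and bl: "bounded_linear \<rho>"
  shows "\<bar>rh (Suc k)\<bar> \<le> \<bar>r (Suc k)\<bar>
     + onorm (\<lambda>h. (\<Sum>j\<in>{1..n}. (rh j * inner h (ps j)) *\<^sub>R pst j) - \<rho> h)"
proof -
  define T where "T h = (\<Sum>j\<in>{1..n}. (rh j * inner h (ps j)) *\<^sub>R pst j)" for h
  have blT: "bounded_linear (\<lambda>h. T h - \<rho> h)"
    unfolding T_def by (rule bounded_linear_sub[OF bl_sum bl])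
  have sub: "{1..Suc k} \<subseteq> {1..n}" using kn by auto
  obtain x where x: "norm x = 1" "x \<in> span (ps ` {1..Suc k})" "\<forall>i\<in>{1..k}. inner x (\<psi> i) = 0"
    using kernel_exists[OF ps_on sub psi_on] by blast
  have rx: "norm (\<rho> x) \<le> \<bar>r (Suc k)\<bar>"
    using rho_bound[where \<rho>=\<rho>, OF psi_on psit_on rho_svd[of x] r_mono x(3)] x(1) by simp
  have e: "x = (\<Sum>j\<in>{1..Suc k}. inner x (ps j) *\<^sub>R ps j)"
    by (rule span_expand[OF ps_on _ sub x(2)]) simp
  have n1: "(\<Sum>j\<in>{1..Suc k}. (inner x (ps j))\<^sup>2) = 1"
    using arg_cong[OF e, of "\<lambda>y. (norm y)\<^sup>2"] on_norm2[OF ps_on _ sub, of "\<lambda>j. inner x (ps j)"] x(1)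
    by simp
  have mono: "\<bar>rh (Suc k)\<bar> \<le> \<bar>rh j\<bar>" if "j \<in> {1..Suc k}" for j
    using abs_mono_chain[of n rh j "Suc k"] rh_mono that kn by auto
  have "(\<bar>rh (Suc k)\<bar>)\<^sup>2 = (\<Sum>j\<in>{1..Suc k}. (rh (Suc k))\<^sup>2 * (inner x (ps j))\<^sup>2)"
    using n1 by (simp add: sum_distrib_left[symmetric])
  also have "\<dots> \<le> (\<Sum>j\<in>{1..Suc k}. (rh j * inner x (ps j))\<^sup>2)"
  proof (rule sum_mono)
    fix j assume "j \<in> {1..Suc k}"
    then have "(rh (Suc k))\<^sup>2 \<le> (rh j)\<^sup>2" using mono by (metis abs_ge_zero power2_abs power_mono)
    then show "(rh (Suc k))\<^sup>2 * (inner x (ps j))\<^sup>2 \<le> (rh j * inner x (ps j))\<^sup>2"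
      by (simp add: power_mult_distrib mult_right_mono)
  qed
  also have "\<dots> \<le> (\<Sum>j\<in>{1..n}. (rh j * inner x (ps j))\<^sup>2)"
    by (rule sum_mono2) (use sub in auto)
  also have "\<dots> = (norm (T x))\<^sup>2"
    unfolding T_def by (rule on_norm2[OF pst_on, symmetric]) auto
  finally have "\<bar>rh (Suc k)\<bar> \<le> norm (T x)" by (rule power2_le_imp_le) simp
  also have "norm (T x) \<le> norm (\<rho> x) + norm (T x - \<rho> x)"
    by (metis add.commute diff_add_cancel norm_triangle_ineq)
  also have "norm (T x - \<rho> x) \<le> onorm (\<lambda>h. T h - \<rho> h) * norm x"
    using onorm[OF blT] by simp
  finally show ?thesis using rx x(1) unfolding T_def by simp
qed

lemma diag_bound:
  fixes \<rho> :: "'h::real_inner \<Rightarrow> 'h" and ps pst :: "nat \<Rightarrow> 'h"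
  assumes kn: "k < n" and ps_on: "orthonormal_on {1..n} ps" and pst_on: "orthonormal_on {1..n} pst"
    and rh_mono: "\<And>j. 1 \<le> j \<Longrightarrow> j < n \<Longrightarrow> \<bar>rh (Suc j)\<bar> \<le> \<bar>rh j\<bar>"
    and bl: "bounded_linear \<rho>"
  shows "onorm (\<lambda>x. (\<Sum>j\<in>{1..k}. (rh j * inner x (ps j)) *\<^sub>R pst j) - \<rho> x) \<le> \<bar>rh (Suc k)\<bar>
     + onorm (\<lambda>h. (\<Sum>j\<in>{1..n}. (rh j * inner h (ps j)) *\<^sub>R pst j) - \<rho> h)"
proof -
  define T where "T h = (\<Sum>j\<in>{1..n}. (rh j * inner h (ps j)) *\<^sub>R pst j)" for h
  define D where "D h = (\<Sum>j\<in>{1..k}. (rh j * inner h (ps j)) *\<^sub>R pst j)" for h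
  have blT: "bounded_linear (\<lambda>h. T h - \<rho> h)"
    unfolding T_def by (rule bounded_linear_sub[OF bl_sum bl])
  have mono: "\<bar>rh j\<bar> \<le> \<bar>rh (Suc k)\<bar>" if "Suc k \<le> j" "j \<le> n" for j
    using abs_mono_chain[of n rh "Suc k" j] rh_mono that by auto
  have "onorm (\<lambda>x. D x - \<rho> x) \<le> \<bar>rh (Suc k)\<bar> + onorm (\<lambda>h. T h - \<rho> h)"
  proof (rule onorm_bound)
    show "0 \<le> \<bar>rh (Suc k)\<bar> + onorm (\<lambda>h. T h - \<rho> h)" using onorm_pos_le[OF blT] by simp
    fix x
    define c where "c j = (if j \<le> k then 0 else rh j * inner x (ps j))" for j
    have split: "T x = D x + (\<Sum>j\<in>{1..n}. c j *\<^sub>R pst j)"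
    proof -
      have "T x = (\<Sum>j\<in>{1..n}. (if j \<le> k then (rh j * inner x (ps j)) *\<^sub>R pst j else 0))
                + (\<Sum>j\<in>{1..n}. c j *\<^sub>R pst j)"
        unfolding T_def c_def by (subst sum.distrib[symmetric]) (rule sum.cong, auto)
      also have "(\<Sum>j\<in>{1..n}. (if j \<le> k then (rh j * inner x (ps j)) *\<^sub>R pst j else 0))
           = (\<Sum>j\<in>{j\<in>{1..n}. j \<le> k}. (rh j * inner x (ps j)) *\<^sub>R pst j)"
        by (rule sum.inter_filter[symmetric]) simp
      also have "{j\<in>{1..n}. j \<le> k} = {1..k}" using kn by auto
      finally show ?thesis unfolding D_def .
    qed
    have "(norm (\<Sum>j\<in>{1..n}. c j *\<^sub>R pst j))\<^sup>2 = (\<Sum>j\<in>{1..n}. (c j)\<^sup>2)"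
      by (rule on_norm2[OF pst_on]) auto
    also have "\<dots> \<le> (\<Sum>j\<in>{1..n}. (rh (Suc k))\<^sup>2 * (inner x (ps j))\<^sup>2)"
    proof (rule sum_mono)
      fix j assume j: "j \<in> {1..n}"
      show "(c j)\<^sup>2 \<le> (rh (Suc k))\<^sup>2 * (inner x (ps j))\<^sup>2"
      proof (cases "j \<le> k")
        case True then show ?thesis unfolding c_def by simp
      next
        case False
        then have "\<bar>rh j\<bar> \<le> \<bar>rh (Suc k)\<bar>" using mono j by simp
        then have "(rh j)\<^sup>2 \<le> (rh (Suc k))\<^sup>2" by (metis abs_ge_zero power2_abs power_mono)
        then show ?thesis unfolding c_def using False by (simp add: power_mult_distrib mult_right_mono)
      qed
    qed
    also have "\<dots> = (rh (Suc k))\<^sup>2 * (\<Sum>j\<in>{1..n}. (inner x (ps j))\<^sup>2)" by (simp add: sum_distrib_left)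
    also have "\<dots> \<le> (rh (Suc k))\<^sup>2 * (norm x)\<^sup>2"
      by (rule mult_left_mono[OF bessel[OF ps_on]]) auto
    also have "\<dots> = (\<bar>rh (Suc k)\<bar> * norm x)\<^sup>2" by (simp add: power_mult_distrib)
    finally have b1: "norm (\<Sum>j\<in>{1..n}. c j *\<^sub>R pst j) \<le> \<bar>rh (Suc k)\<bar> * norm x"
      by (rule power2_le_imp_le) simp
    have b2: "norm (T x - \<rho> x) \<le> onorm (\<lambda>h. T h - \<rho> h) * norm x"
      using onorm[OF blT] by simp
    have "D x - \<rho> x = (T x - \<rho> x) - (\<Sum>j\<in>{1..n}. c j *\<^sub>R pst j)" using split by simp
    then have "norm (D x - \<rho> x) \<le> norm (T x - \<rho> x) + norm (\<Sum>j\<in>{1..n}. c j *\<^sub>R pst j)"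
      by (metis norm_triangle_ineq4)
    then show "norm (D x - \<rho> x) \<le> (\<bar>rh (Suc k)\<bar> + onorm (\<lambda>h. T h - \<rho> h)) * norm x"
      using b1 b2 by (simp add: distrib_right)
  qed
  then show ?thesis unfolding T_def D_def .
qed

theorem theorem3:
  fixes P :: "'a measure"
    and X eps :: "int \<Rightarrow> 'a \<Rightarrow> 'h::{real_inner,banach,second_countable_topology}"
    and \<rho> :: "'h \<Rightarrow> 'h"
    and C :: "nat \<Rightarrow> real" and \<phi> :: "nat \<Rightarrow> 'h"
    and Cn :: "nat \<Rightarrow> 'a \<Rightarrow> nat \<Rightarrow> real" and phin :: "nat \<Rightarrow> 'a \<Rightarrow> nat \<Rightarrow> 'h"
    and r :: "nat \<Rightarrow> real" and \<psi> \<psi>t :: "nat \<Rightarrow> 'h"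
    and rh :: "nat \<Rightarrow> 'a \<Rightarrow> nat \<Rightarrow> real" and ps pst :: "nat \<Rightarrow> 'a \<Rightarrow> nat \<Rightarrow> 'h"
    and k :: "nat \<Rightarrow> nat" and Mn :: "nat \<Rightarrow> real" and Mb :: real
  assumes prob: "prob_space P"
    \<comment> \<open>\<rho> \<in> L(H) with ||\<rho>^k|| < 1 for k \<ge> k0\<close>
    and rho_bl: "bounded_linear \<rho>"
    and rho_pow: "\<exists>k0. \<forall>j\<ge>k0. onorm (\<rho> ^^ j) < 1"
    \<comment> \<open>strong white noise\<close>
    and eps_meas: "\<And>n. eps n \<in> borel_measurable P"
    and eps_indep: "prob_space.indep_vars P (\<lambda>_. borel) eps UNIV"
    and eps_id: "\<And>n. distr P borel (eps n) = distr P borel (eps 0)"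
    and eps_int: "\<And>n. integrable P (eps n)"
    and eps_mean: "\<And>n. (\<integral>\<omega>. eps n \<omega> \<partial>P) = 0"
    and eps_sq: "\<And>n. integrable P (\<lambda>\<omega>. (norm (eps n \<omega>))\<^sup>2)"
    and eps_sq_pos: "(\<integral>\<omega>. (norm (eps 0 \<omega>))\<^sup>2 \<partial>P) > 0"
    \<comment> \<open>X is a (strictly) stationary solution of the ARH(1) equation\<close>
    and X_meas: "\<And>n. X n \<in> borel_measurable P"
    and X_eq: "AE \<omega> in P. \<forall>n. X n \<omega> = \<rho> (X (n - 1) \<omega>) + eps n \<omega>"
    and X_stat: "\<And>J m. finite J \<Longrightarrow>
        distr P (PiM J (\<lambda>_. borel)) (\<lambda>\<omega>. \<lambda>j\<in>J. X (j + m) \<omega>)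
          = distr P (PiM J (\<lambda>_. borel)) (\<lambda>\<omega>. \<lambda>j\<in>J. X j \<omega>)"
    \<comment> \<open>spectral decomposition of C_X\<close>
    and C_mono: "\<And>j. j \<ge> 1 \<Longrightarrow> C (Suc j) \<le> C j"
    and phi_on: "orthonormal_on {1..} \<phi>"
    and phi_eig: "\<And>j. j \<ge> 1 \<Longrightarrow> cov_op P (X 0) (X 0) (\<phi> j) = C j *\<^sub>R \<phi> j"
    and C_spec: "\<And>x. (\<lambda>m. \<Sum>j\<in>{1..m}. (C j * inner x (\<phi> j)) *\<^sub>R \<phi> j)
                      \<longlonglongrightarrow> cov_op P (X 0) (X 0) x"
    \<comment> \<open>spectral decomposition of C_n\<close>
    and Cn_mono: "\<And>n \<omega> j. j \<ge> 1 \<Longrightarrow> Cn n \<omega> (Suc j) \<le> Cn n \<omega> j"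
    and Cn_nonneg: "\<And>n \<omega> j. Cn n \<omega> j \<ge> 0"
    and Cn_zero: "\<And>n \<omega> j. j > n \<Longrightarrow> Cn n \<omega> j = 0"
    and phin_on: "\<And>n \<omega>. orthonormal_on {1..n} (phin n \<omega>)"
    and Cn_spec: "\<And>n \<omega> x. emp_cov X n \<omega> x
                      = (\<Sum>j\<in>{1..n}. (Cn n \<omega> j * inner x (phin n \<omega> j)) *\<^sub>R phin n \<omega> j)"
    \<comment> \<open>singular value decomposition of \<rho>\<close>
    and r_mono: "\<And>j. j \<ge> 1 \<Longrightarrow> \<bar>r (Suc j)\<bar> \<le> \<bar>r j\<bar>"
    and psi_on: "orthonormal_on {1..} \<psi>"
    and psit_on: "orthonormal_on {1..} \<psi>t"
    and rho_svd: "\<And>x. (\<lambda>m. \<Sum>j\<in>{1..m}. (r j * inner x (\<psi> j)) *\<^sub>R \<psi>t j) \<longlonglongrightarrow> \<rho> x"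
    \<comment> \<open>singular value decomposition of D_n C_n^{-1}\<close>
    and rh_mono: "\<And>n \<omega> j. 1 \<le> j \<Longrightarrow> j < n \<Longrightarrow> \<bar>rh n \<omega> (Suc j)\<bar> \<le> \<bar>rh n \<omega> j\<bar>"
    and ps_on: "\<And>n \<omega>. orthonormal_on {1..n} (ps n \<omega>)"
    and pst_on: "\<And>n \<omega>. orthonormal_on {1..n} (pst n \<omega>)"
    and DC_svd: "\<And>n \<omega> h. emp_cross X n \<omega> (emp_cov_inv Cn phin n \<omega> h)
                      = (\<Sum>j\<in>{1..n}. (rh n \<omega> j * inner h (ps n \<omega> j)) *\<^sub>R pst n \<omega> j)"
    \<comment> \<open>truncation parameter\<close>
    and k_lim: "filterlim k at_top sequentially"
    and k_lt: "\<And>n. n \<ge> 1 \<Longrightarrow> real (k n) / real n < 1"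
    and Lam_fin: "\<And>j. j \<ge> 1 \<Longrightarrow> C (Suc j) < C j"
    and Lam_rate: "\<exists>\<beta>>1/2. (\<lambda>n. sqrt (real (k n)) * Lambda_gap C (k n))
                      \<in> o(\<lambda>n. real n powr (1/4) / ln (real n) powr \<beta>)"
    \<comment> \<open>A1 -- A4\<close>
    and A1: "AE \<omega> in P. norm (X 0 \<omega>) < Mb"
    and A2: "AE \<omega> in P. \<forall>n. k n \<ge> 1 \<longrightarrow> Cn n \<omega> (k n) > 0"
    and A3_C: "\<And>j. j \<ge> 1 \<Longrightarrow> C j > 0"
    and A3_D: "nuclear_op (cov_op P (X 0) (X 1))"
    and A3_rho: "compact_op \<rho>"
    and A4: "AE \<omega> in P. \<forall>n\<ge>1. (SUP j\<in>{1..}. \<bar>r j\<bar>) + (SUP j\<in>{1..n}. \<bar>rh n \<omega> j\<bar>) \<le> 1"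
    \<comment> \<open>\<rho> trace operator\<close>
    and rho_trace: "nuclear_op \<rho>"
    \<comment> \<open>rate M_n and \<Lambda>^\<rho>\<close>
    and LamRho_fin: "\<And>j. j \<ge> 1 \<Longrightarrow> \<bar>r (Suc j)\<bar> < \<bar>r j\<bar>"
    and Mn_rate: "AE \<omega> in P. (\<lambda>n. onorm (\<lambda>h. emp_cross X n \<omega> (emp_cov_inv Cn phin n \<omega> h) - \<rho> h))
                      \<in> O(Mn)"
    and LamRho_rate: "(\<lambda>n. real (k n) * Lambda_rho r (k n)) \<in> o(\<lambda>n. 1 / Mn n)"
  shows "AE \<omega> in P. (\<lambda>n. onorm (\<lambda>x. diag_est rh ps pst (k n) n \<omega> x - \<rho> x)) \<longlonglongrightarrow> 0"
  proof -
  have r0: "r \<longlonglongrightarrow> 0" by (rule r_to_0[OF A3_rho psi_on psit_on rho_svd r_mono])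
  define L where "L = inverse (\<bar>r 1\<bar>^2 - \<bar>r (Suc 1)\<bar>^2)"
  have Lpos: "L > 0"
  proof -
    have "\<bar>r (Suc 1)\<bar> < \<bar>r 1\<bar>" using LamRho_fin[of 1] by simp
    then have "\<bar>r (Suc 1)\<bar>^2 < \<bar>r 1\<bar>^2" by (metis abs_ge_zero power_strict_mono zero_less_numeral)
    then show ?thesis unfolding L_def by simp
  qed
  have Lam: "Lambda_rho r kk \<ge> L" if "kk \<ge> 1" for kk
    unfolding Lambda_rho_def L_def by (rule Max_ge) (use that in auto)
  have evk: "\<forall>\<^sub>F n in sequentially. k n \<ge> 1"
    using k_lim unfolding filterlim_at_top by auto
  have ev2: "\<forall>\<^sub>F n in sequentially. norm (real (k n) * Lambda_rho r (k n)) \<le> 1 * norm (1 / Mn n)"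
    by (rule landau_o.smallD[OF LamRho_rate]) simp
  have evM: "\<forall>\<^sub>F n in sequentially. norm (Mn n) \<le> inverse L * inverse (real (k n))"
    using evk ev2
  proof eventually_elim
    case (elim n)
    have a: "real (k n) * L \<le> real (k n) * Lambda_rho r (k n)"
      using Lam[OF elim(1)] by (simp add: mult_left_mono)
    have p: "real (k n) * L > 0" using elim(1) Lpos by simp
    have "real (k n) * Lambda_rho r (k n) \<ge> 0" using a p by linarith
    then have b: "real (k n) * L \<le> 1 / \<bar>Mn n\<bar>" using a elim(2) by simp
    then have "\<bar>Mn n\<bar> \<noteq> 0" using p by auto
    then have "\<bar>Mn n\<bar> \<le> 1 / (real (k n) * L)" using b p
      by (simp add: le_divide_eq divide_le_eq mult.commute)
    then show ?case by (simp add: field_simps)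
  qed
  have kinv: "(\<lambda>n. inverse (real (k n))) \<longlonglongrightarrow> 0"
    by (rule tendsto_inverse_0_at_top[OF filterlim_compose[OF filterlim_real_sequentially k_lim]])
  have Mn0: "Mn \<longlonglongrightarrow> 0"
    by (rule Lim_null_comparison[OF evM]) (use tendsto_mult_right_zero[OF kinv] in simp)
  have r1: "(\<lambda>n. r (Suc (k n))) \<longlonglongrightarrow> 0"
    using filterlim_compose[OF LIMSEQ_Suc[OF r0] k_lim] by (simp add: o_def)
  have main: "(\<lambda>n. onorm (\<lambda>x. diag_est rh ps pst (k n) n \<omega> x - \<rho> x)) \<longlonglongrightarrow> 0"
    if O: "(\<lambda>n. onorm (\<lambda>h. emp_cross X n \<omega> (emp_cov_inv Cn phin n \<omega> h) - \<rho> h)) \<in> O(Mn)" for \<omega>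
  proof -
    define E where "E n = onorm (\<lambda>h. (\<Sum>j\<in>{1..n}. (rh n \<omega> j * inner h (ps n \<omega> j)) *\<^sub>R pst n \<omega> j) - \<rho> h)" for n
    have EO: "E \<in> O(Mn)" using O unfolding E_def by (simp add: DC_svd)
    obtain c where c: "c > 0" "\<forall>\<^sub>F n in sequentially. norm (E n) \<le> c * norm (Mn n)"
      using landau_o.bigE[OF EO] by blast
    have E0: "E \<longlonglongrightarrow> 0"
      by (rule Lim_null_comparison[OF c(2)])
        (rule tendsto_mult_right_zero[OF tendsto_norm_zero[OF Mn0]])
    have evb: "\<forall>\<^sub>F n in sequentially. norm (onorm (\<lambda>x. diag_est rh ps pst (k n) n \<omega> x - \<rho> x))
                 \<le> \<bar>r (Suc (k n))\<bar> + 2 * E n"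
    proof (rule eventually_sequentiallyI[of 1])
      fix n :: nat assume n1: "1 \<le> n"
      have kn: "k n < n" using k_lt[OF n1] n1 by (simp add: divide_less_eq)
      have rhm: "\<And>j. 1 \<le> j \<Longrightarrow> j < n \<Longrightarrow> \<bar>rh n \<omega> (Suc j)\<bar> \<le> \<bar>rh n \<omega> j\<bar>" using rh_mono by blast
      have d: "onorm (\<lambda>x. diag_est rh ps pst (k n) n \<omega> x - \<rho> x) \<le> \<bar>rh n \<omega> (Suc (k n))\<bar> + E n"
        unfolding diag_est_def E_def by (rule diag_bound[where rh="rh n \<omega>" and \<rho>=\<rho>, OF kn ps_on[of n \<omega>] pst_on[of n \<omega>] rhm rho_bl])
      have s: "\<bar>rh n \<omega> (Suc (k n))\<bar> \<le> \<bar>r (Suc (k n))\<bar> + E n"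
        unfolding E_def by (rule sv_bound[where rh="rh n \<omega>" and \<rho>=\<rho> and r=r, OF kn ps_on[of n \<omega>] pst_on[of n \<omega>] rhm psi_on psit_on rho_svd r_mono rho_bl])
      have bl: "bounded_linear (\<lambda>x. diag_est rh ps pst (k n) n \<omega> x - \<rho> x)"
        unfolding diag_est_def by (rule bounded_linear_sub[OF bl_sum rho_bl])
      have "onorm (\<lambda>x. diag_est rh ps pst (k n) n \<omega> x - \<rho> x) \<ge> 0" by (rule onorm_pos_le[OF bl])
      then show "norm (onorm (\<lambda>x. diag_est rh ps pst (k n) n \<omega> x - \<rho> x)) \<le> \<bar>r (Suc (k n))\<bar> + 2 * E n"
        using d s by simp
    qed
    have "(\<lambda>n. \<bar>r (Suc (k n))\<bar> + 2 * E n) \<longlonglongrightarrow> 0"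
      using tendsto_add_zero[OF tendsto_rabs_zero[OF r1] tendsto_mult_right_zero[OF E0, of 2]] by simp
    then show ?thesis by (rule Lim_null_comparison[OF evb])
  qed
  show ?thesis using Mn_rate by (rule eventually_mono) (rule main)
qed

end
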